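(* Assume the standing assumptions below hold and that $f(\cdot,0)$ satisfies the $\delta$-RIP$_{2r,2r}$ property with $\delta<1/3$. Let $\epsilon$ satisfy $0\le \epsilon<\frac{1/3-\delta}{\zeta_2}$ (interpreted as $\epsilon\in[0,\infty)$ when $\zeta_2=0$), and let $w\in\mathbb R^m$ satisfy $\|w\|_2\le\epsilon$. Then every local minimizer $\hat X\in\mathbb R^{n\times r}$ of $X\mapsto h(X,w)$ satisfies $$\|\hat X\hat X^\top-M^*\|_F\le \frac{2\zeta_1\epsilon}{1-3(\delta+\zeta_2\epsilon)}.$$ (Consequently, if $w$ is random, this holds for all local minimizers with probability at least $\mathbb P(\|w\|_2\le\epsilon)$.)
   Context: Standing assumptions. Let $n,r,m$ be positive integers, $r\le n$. Let $f:\mathbb R^{n\times n}\times\mathbb R^m\to\mathbb R$, $(M,w)\mapsto f(M,w)$, be twice continuously differentiable in its first argument $M$ for each fixed $w$, with gradient $\nabla_M f(M,w)\in\mathbb R^{n\times n}$ symmetric for all $M,w$. The Hessian is the bilinear form $[\nabla^2_M f(M,w)](K,L)=\sum_{i,j,k,l=1}^n\frac{\partial^2 f}{\partial M_{ij}\partial M_{kl}}(M,w)K_{ij}L_{kl}$. RIP: $f(\cdot,0)$ satisfies the $\delta$-RIP$_{2r,2r}$ property ($\delta\in[0,1)$) if $(1-\delta)\|N\|_F^2\le[\nabla^2_M f(M,0)](N,N)\le(1+\delta)\|N\|_F^2$ for all $M,N\in\mathbb R^{n\times n}$ with $\mathrm{rank}(M)\le 2r$, $\mathrm{rank}(N)\le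 2r$. Noise assumption: there are constants $\zeta_1,\zeta_2\ge0$ such that for all $w\in\mathbb R^m$ and all $M,K,L\in\mathbb R^{n\times n}$ of rank at most $2r$: $|\langle\nabla_M f(M,w)-\nabla_M f(M,0),K\rangle|\le\zeta_1\|w\|_2\|K\|_F$ and $|[\nabla^2_M f(M,w)-\nabla^2_M f(M,0)](K,L)|\le\zeta_2\|w\|_2\|K\|_F\|L\|_F$. Here $\langle A,B\rangle=\mathrm{tr}(A^\top B)$. Ground truth: $M^*\in\mathbb R^{n\times n}$ is symmetric positive semidefinite of rank $r$, minimizes $f(\cdot,0)$ over PSD matrices of rank at most $r$, and satisfies $\nabla_M f(M^*,0)=0$. Define $h(X,w)=f(XX^\top,w)$ for $X\in\mathbb R^{n\times r}$; a local minimizer of $h(\cdot,w)$ means a local minimizer of the unconstrained function $X\mapsto h(X,w)$ on $\mathbb R^{n\times r}$ with $w$ fixed. *)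

theory Defs
  imports "HOL-Analysis.Analysis"
begin

end

theory Submission
  imports Defs
begin

definition outer :: "real^'a \<Rightarrow> real^'b \<Rightarrow> real^'b^'a" where
  "outer x y = (\<chi> i j. x$i * y$j)"

lemma inner_mat: "inner (A::real^'n^'m) B = (\<Sum>i\<in>UNIV. \<Sum>j\<in>UNIV. A$i$j * B$i$j)"
  by (simp add: inner_vec_def)

lemma quad_sum: "(x::real^'m) \<bullet> ((A::real^'n^'m) *v y) = (\<Sum>i\<in>UNIV. \<Sum>j\<in>UNIV. x$i * A$i$j * y$j)"
  by (simp add: inner_vec_def matrix_vector_mult_def sum_distrib_left mult.assoc)

lemma inner_outer: "inner (A::real^'n^'m) (outer x y) = x \<bullet> (A *v y)"
  unfolding inner_mat quad_sum outer_def by (simp add: mult.commute mult.left_commute)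

lemma inner_mult_transpose:
  fixes A :: "real^'n^'m" and B :: "real^'k^'m" and C :: "real^'k^'n"
  shows "inner A (B ** transpose C) = inner (A ** C) B"
proof -
  have "inner A (B ** transpose C) = (\<Sum>i\<in>UNIV. \<Sum>j\<in>UNIV. \<Sum>k\<in>UNIV. A$i$j * B$i$k * C$j$k)"
    by (simp add: inner_mat matrix_matrix_mult_def transpose_def sum_distrib_left mult.assoc)
  also have "\<dots> = (\<Sum>i\<in>UNIV. \<Sum>k\<in>UNIV. \<Sum>j\<in>UNIV. A$i$j * B$i$k * C$j$k)"
    by (rule sum.cong[OF refl], rule sum.swap)
  also have "\<dots> = inner (A ** C) B"
    by (simp add: inner_mat matrix_matrix_mult_def sum_distrib_left sum_distrib_right mult.commute mult.left_commute)
  finally show ?thesis .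
qed

lemma inner_transpose: "inner (transpose (A::real^'n^'m)) (transpose B) = inner A B"
  unfolding inner_mat transpose_def by simp (rule sum.swap)

lemma inner_mat1: "inner (mat 1 :: real^'n^'n) A = trace A"
proof -
  have "(\<Sum>j\<in>UNIV. (mat 1::real^'n^'n)$i$j * A$i$j) = A$i$i" for i
  proof -
    have "(\<Sum>j\<in>UNIV. (mat 1::real^'n^'n)$i$j * A$i$j) = (\<Sum>j\<in>UNIV. if i = j then A$i$j else 0)"
      by (rule sum.cong) (auto simp: mat_def)
    then show ?thesis by simp
  qed
  then show ?thesis unfolding inner_mat trace_def by simp
qed

lemma inner_trace: "inner (A::real^'n^'m) B = trace (transpose A ** B)"
  unfolding inner_mat trace_def transpose_def matrix_matrix_mult_def by simp (rule sum.swap)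

definition psd :: "real^'n^'n \<Rightarrow> bool" where
  "psd A \<longleftrightarrow> (\<forall>x. 0 \<le> x \<bullet> (A *v x))"

lemma quad_sym: "transpose (W::real^'n^'n) = W \<Longrightarrow> x \<bullet> (W *v y) = y \<bullet> (W *v x)"
proof -
  assume "transpose W = W"
  then have w: "W$i$j = W$j$i" for i j by (metis transpose_def vec_lambda_beta)
  have "x \<bullet> (W *v y) = (\<Sum>i\<in>UNIV. \<Sum>j\<in>UNIV. x$i * W$i$j * y$j)" by (rule quad_sum)
  also have "\<dots> = (\<Sum>j\<in>UNIV. \<Sum>i\<in>UNIV. x$i * W$i$j * y$j)" by (rule sum.swap)
  also have "\<dots> = y \<bullet> (W *v x)" unfolding quad_sum by (simp add: w mult.commute mult.left_commute)
  finally show ?thesis .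
qed

lemma quad_axis: "axis i 1 \<bullet> ((A::real^'n^'m) *v axis j 1) = A$i$j"
  by (simp add: matrix_vector_mult_basis column_def inner_commute[of "axis i 1"] inner_axis)

lemma quad_outer: "x \<bullet> (outer c c *v x) = (x \<bullet> c)^2"
proof -
  have "x \<bullet> (outer c c *v x) = (\<Sum>i\<in>UNIV. \<Sum>j\<in>UNIV. (x$i * c$i) * (x$j * c$j))"
    unfolding quad_sum outer_def by (simp add: mult.commute mult.left_commute)
  also have "\<dots> = (x \<bullet> c)^2" by (simp add: inner_vec_def power2_eq_square sum_product)
  finally show ?thesis .
qed

lemma psd_cs:
  assumes sym: "transpose (W::real^'n^'n) = W" and W: "psd W"
  shows "(x \<bullet> (W *v y))^2 \<le> (x \<bullet> (W *v x)) * (y \<bullet> (W *v y))"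
proof -
  define a where "a = x \<bullet> (W *v x)"
  define b where "b = x \<bullet> (W *v y)"
  define c where "c = y \<bullet> (W *v y)"
  have q: "0 \<le> a + 2*t*b + t^2*c" for t
  proof -
    have "0 \<le> (x + t *\<^sub>R y) \<bullet> (W *v (x + t *\<^sub>R y))" using W psd_def by blast
    also have "\<dots> = a + 2*t*b + t^2*c"
      using quad_sym[OF sym, of y x]
      by (simp add: a_def b_def c_def algebra_simps matrix_vector_mult_scaleR power2_eq_square)
    finally show ?thesis .
  qed
  have c0: "0 \<le> c" using W psd_def c_def by blast
  show ?thesis
  proof (cases "c = 0")
    case True
    have "b = 0"
    proof (rule ccontr)
      assume "b \<noteq> 0"
      have "0 \<le> a + 2*(-(a+1)/(2*b))*b" using q[of "-(a+1)/(2*b)"] True by simp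
      also have "\<dots> = -1" using \<open>b \<noteq> 0\<close> by (simp add: field_simps)
      finally show False by simp
    qed
    then show ?thesis using True a_def c_def b_def by simp
  next
    case False
    then have cp: "0 < c" using c0 by simp
    have "0 \<le> a + 2*(-b/c)*b + (-b/c)^2*c" by (rule q)
    also have "\<dots> = a - b^2/c" using cp by (simp add: field_simps power2_eq_square)
    finally have "b^2 / c \<le> a" by simp
    then have "b^2 \<le> a * c" using cp by (simp add: pos_divide_le_eq)
    then show ?thesis by (simp add: a_def b_def c_def)
  qed
qed

lemma transpose_diff: "transpose ((A::real^'n^'m) - B) = transpose A - transpose B"
  by (simp add: vec_eq_iff transpose_def)

lemma transpose_add: "transpose ((A::real^'n^'m) + B) = transpose A + transpose B"
  by (simp add: vec_eq_iff transpose_def)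

lemma psd_inner_nonneg:
  assumes S: "psd (S::real^'n^'n)" and Wsym: "transpose W = W" and W: "psd W"
  shows "0 \<le> inner S W"
proof -
  have main: "\<forall>W::real^'n^'n. transpose W = W \<longrightarrow> psd W \<longrightarrow> (\<forall>i j. W$i$j \<noteq> 0 \<longrightarrow> i \<in> F)
      \<longrightarrow> 0 \<le> inner S W" if "finite F" for F
    using that
  proof (induction F)
    case empty
    show ?case
    proof (intro allI impI)
      fix W :: "real^'n^'n"
      assume "\<forall>i j. W$i$j \<noteq> 0 \<longrightarrow> i \<in> {}"
      then have "W = 0" by (simp add: vec_eq_iff)
      then show "0 \<le> inner S W" by simp
    qed
  next
    case (insert a F)
    show ?case
    proof (intro allI impI)
      fix W :: "real^'n^'n"
      assume sym: "transpose W = W" and pW: "psd W" and supp: "\<forall>i j. W$i$j \<noteq> 0 \<longrightarrow> i \<in> insert a F"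
      have wsym: "W$i$j = W$j$i" for i j using sym by (metis transpose_def vec_lambda_beta)
      have waa: "0 \<le> W$a$a" using pW unfolding psd_def by (metis quad_axis)
      show "0 \<le> inner S W"
      proof (cases "W$a$a = 0")
        case True
        have row0: "W$a$j = 0" for j
        proof -
          have "(W$a$j)^2 \<le> W$a$a * W$j$j"
            using psd_cs[OF sym pW, of "axis a 1" "axis j 1"] by (simp add: quad_axis)
          then show ?thesis using True by simp
        qed
        have "\<forall>i j. W$i$j \<noteq> 0 \<longrightarrow> i \<in> F"
          using supp row0 by blast
        then show ?thesis using insert.IH sym pW by blast
      next
        case False
        then have wp: "0 < W$a$a" using waa by simp
        define c where "c = (\<chi> i. W$i$a)"
        define W' where "W' = W - (1 / W$a$a) *\<^sub>R outer c c"
        have sym': "transpose W' = W'"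
          unfolding W'_def by (simp add: transpose_diff transpose_scalar sym)
            (simp add: vec_eq_iff transpose_def outer_def mult.commute)
        have ca: "c = W *v axis a 1" by (simp add: c_def matrix_vector_mult_basis column_def)
        have psd': "psd W'"
          unfolding psd_def
        proof
          fix x
          have cs: "(x \<bullet> c)^2 \<le> (x \<bullet> (W *v x)) * W$a$a"
            using psd_cs[OF sym pW, of x "axis a 1"] by (simp add: quad_axis ca)
          have "x \<bullet> (W' *v x) = x \<bullet> (W *v x) - (x \<bullet> c)^2 / W$a$a"
            unfolding W'_def by (simp add: matrix_vector_mult_diff_rdistrib inner_diff_right quad_outer
               scaleR_matrix_vector_assoc[symmetric])
          also have "\<dots> \<ge> 0" using cs wp by (simp add: divide_le_eq)
          finally show "0 \<le> x \<bullet> (W' *v x)" by simp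
        qed
        have supp': "\<forall>i j. W'$i$j \<noteq> 0 \<longrightarrow> i \<in> F"
        proof (intro allI impI)
          fix i j assume nz: "W'$i$j \<noteq> 0"
          have e: "W'$i$j = W$i$j - W$i$a * W$j$a / W$a$a"
            by (simp add: W'_def outer_def c_def)
          show "i \<in> F"
          proof (rule ccontr)
            assume "i \<notin> F"
            show False
            proof (cases "i = a")
              case True
              then show False using nz e wp wsym[of a j] by simp
            next
              case False
              then have "W$i$j = 0" "W$i$a = 0" using supp \<open>i \<notin> F\<close> by auto
              then show False using nz e by simp
            qed
          qed
        qed
        have "0 \<le> inner S W'" using insert.IH sym' psd' supp' by blast
        moreover have "0 \<le> inner S (outer c c)" using S by (simp add: inner_outer psd_def)
        moreover have "inner S W = inner S W' + (1 / W$a$a) * inner S (outer c c)"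
          unfolding W'_def by (simp add: inner_diff_right)
        ultimately show ?thesis using wp by simp
      qed
    qed
  qed
  show ?thesis using main[of UNIV] Wsym W by simp
qed

lemma gram_quad: "a \<bullet> ((transpose Y ** Y) *v a) = (Y *v a) \<bullet> ((Y::real^'r^'n) *v a)"
  by (simp add: matrix_vector_mul_assoc[symmetric] inner_commute[of a] dot_lmul_matrix)

lemma proj_exists:
  fixes Y :: "real^'r^'n"
  assumes ker: "\<forall>a. Y *v a = 0 \<longrightarrow> a = 0"
  obtains B :: "real^'r^'r" where "B ** (transpose Y ** Y) = mat 1" "(transpose Y ** Y) ** B = mat 1"
    "transpose B = B"
proof -
  have "\<forall>a. (transpose Y ** Y) *v a = 0 \<longrightarrow> a = 0"
  proof (intro allI impI)
    fix a assume "(transpose Y ** Y) *v a = 0"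
    then have "(Y *v a) \<bullet> (Y *v a) = 0" using gram_quad[of a Y] by simp
    then show "a = 0" using ker by simp
  qed
  then obtain B0 :: "real^'r^'r" where "B0 ** (transpose Y ** Y) = mat 1"
    using matrix_left_invertible_ker by blast
  then have B1: "B0 ** (transpose Y ** Y) = mat 1" "(transpose Y ** Y) ** B0 = mat 1"
    using matrix_left_right_inverse by blast+
  have "transpose B0 ** (transpose Y ** Y) = mat 1"
    using arg_cong[OF B1(2), of transpose] by (simp add: matrix_transpose_mul)
  then have "transpose B0 = B0"
    by (metis B1(2) matrix_mul_assoc matrix_mul_lid matrix_mul_rid)
  then show ?thesis using B1 that by blast
qed

lemma proj_props:
  fixes Y :: "real^'r^'n" and B :: "real^'r^'r"
  assumes B1: "B ** (transpose Y ** Y) = mat 1" and B2: "(transpose Y ** Y) ** B = mat 1"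
    and Bs: "transpose B = B"
  defines "P \<equiv> Y ** B ** transpose Y"
  shows "transpose P = P" "P ** Y = Y" "transpose Y ** P = transpose Y" "P ** P = P"
    "trace P = real CARD('r)" "inner P P = real CARD('r)"
    "\<And>x. x \<bullet> (P *v x) = (P *v x) \<bullet> (P *v x)"
    "psd (mat 1 - P)"
proof -
  show ps: "transpose P = P" unfolding P_def by (simp add: matrix_transpose_mul Bs matrix_mul_assoc)
  show py: "P ** Y = Y" unfolding P_def
    by (metis B1 matrix_mul_assoc matrix_mul_rid)
  show yp: "transpose Y ** P = transpose Y" unfolding P_def
    by (metis B2 matrix_mul_assoc matrix_mul_lid)
  show pp: "P ** P = P"
    by (metis P_def py matrix_mul_assoc)
  show tp: "trace P = real CARD('r)"
  proof -
    have "trace P = trace (transpose Y ** (Y ** B))" unfolding P_def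
      by (metis matrix_mul_assoc trace_mul_sym)
    also have "\<dots> = trace (mat 1 :: real^'r^'r)" by (simp add: matrix_mul_assoc B2)
    finally show ?thesis by (simp add: trace_I)
  qed
  show "inner P P = real CARD('r)" using inner_trace[of P P] ps pp tp by simp
  show q: "x \<bullet> (P *v x) = (P *v x) \<bullet> (P *v x)" for x
  proof -
    have "(P *v x) \<bullet> (P *v x) = x \<bullet> ((transpose P ** P) *v x)"
      by (simp add: gram_quad)
    then show ?thesis using ps pp by simp
  qed
  show "psd (mat 1 - P)"
    unfolding psd_def
  proof
    fix x
    have "x \<bullet> ((mat 1 - P) *v x) = (x - P *v x) \<bullet> (x - P *v x)"
      using q[of x] quad_sym[OF ps, of x "P *v x"]
      by (simp add: matrix_vector_mult_diff_rdistrib inner_diff_left inner_diff_right inner_commute)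
    then show "0 \<le> x \<bullet> ((mat 1 - P) *v x)" by simp
  qed
qed

lemma subspace_range_mat: "subspace (range (\<lambda>x. (A::real^'n^'m) *v x))"
  unfolding subspace_def
proof (intro conjI ballI allI)
  show "0 \<in> range (\<lambda>x. A *v x)" by (metis matrix_vector_mult_0_right rangeI)
  fix x y assume "x \<in> range (\<lambda>x. A *v x)" "y \<in> range (\<lambda>x. A *v x)"
  then obtain a b where "x = A *v a" "y = A *v b" by auto
  then show "x + y \<in> range (\<lambda>x. A *v x)" by (metis matrix_vector_right_distrib rangeI)
next
  fix c and x assume "x \<in> range (\<lambda>x. A *v x)"
  then obtain a where "x = A *v a" by auto
  then show "c *\<^sub>R x \<in> range (\<lambda>x. A *v x)" by (metis matrix_vector_mult_scaleR rangeI)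
qed

lemma rank_add_le: "rank ((A::real^'n^'m) + B) \<le> rank A + rank B"
proof -
  let ?S = "range (\<lambda>x. A *v x)" and ?T = "range (\<lambda>x. B *v x)"
  have "range (\<lambda>x. (A+B) *v x) \<subseteq> {x + y |x y. x \<in> ?S \<and> y \<in> ?T}"
    by (auto simp: matrix_vector_mult_add_rdistrib)
  then have "rank (A+B) \<le> dim {x + y |x y. x \<in> ?S \<and> y \<in> ?T}"
    unfolding rank_dim_range by (rule dim_subset)
  also have "\<dots> \<le> dim ?S + dim ?T"
    using dim_sums_Int[OF subspace_range_mat subspace_range_mat, of A B] by linarith
  finally show ?thesis unfolding rank_dim_range .
qed

lemma rank_scale_le: "rank (c *\<^sub>R (A::real^'n^'m)) \<le> rank A"
proof -
  have "range (\<lambda>x. (c *\<^sub>R A) *v x) \<subseteq> range (\<lambda>x. A *v x)"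
  proof (rule image_subsetI)
    fix x
    have "(c *\<^sub>R A) *v x = A *v (c *\<^sub>R x)"
      by (metis scaleR_matrix_vector_assoc matrix_vector_mult_scaleR)
    then show "(c *\<^sub>R A) *v x \<in> range (\<lambda>x. A *v x)" by simp
  qed
  then show ?thesis unfolding rank_dim_range by (rule dim_subset)
qed

lemma rank_diff_le: "rank ((A::real^'n^'m) - B) \<le> rank A + rank B"
proof -
  have "A - B = A + (-1) *\<^sub>R B" by simp
  then show ?thesis using rank_add_le[of A "(-1) *\<^sub>R B"] rank_scale_le[of "-1" B] by simp
qed

lemma second_order_min:
  fixes \<phi> \<phi>' :: "real \<Rightarrow> real"
  assumes d1: "\<And>t. (\<phi> has_real_derivative \<phi>' t) (at t)"
    and d2: "(\<phi>' has_real_derivative a) (at 0)"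
    and lm: "\<exists>e>0. \<forall>t. \<bar>t\<bar> < e \<longrightarrow> \<phi> 0 \<le> \<phi> t"
  shows "\<phi>' 0 = 0" "0 \<le> a"
proof -
  obtain e where e: "e > 0" "\<forall>t. \<bar>t\<bar> < e \<longrightarrow> \<phi> 0 \<le> \<phi> t" using lm by blast
  show z: "\<phi>' 0 = 0"
    by (rule DERIV_local_min[OF d1 e(1)]) (use e(2) in simp)
  show "0 \<le> a"
  proof (rule ccontr)
    assume "\<not> 0 \<le> a"
    then have an: "a < 0" by simp
    have "((\<lambda>y. (\<phi>' y - \<phi>' 0) / (y - 0)) \<longlongrightarrow> a) (at 0)"
      using d2 has_field_derivative_iff by blast
    then have "eventually (\<lambda>y. (\<phi>' y - \<phi>' 0) / (y - 0) < a/2) (at 0)"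
      by (rule order_tendstoD) (use an in simp)
    then obtain d where d: "d > 0" "\<forall>y. y \<noteq> 0 \<and> dist y 0 < d \<longrightarrow> (\<phi>' y - \<phi>' 0) / (y - 0) < a/2"
      unfolding eventually_at by auto
    define t where "t = min d e / 2"
    have t: "0 < t" "t < d" "t < e" using d e by (auto simp: t_def)
    obtain z where zz: "0 < z" "z < t" "\<phi> t - \<phi> 0 = (t - 0) * \<phi>' z"
      using MVT2[of 0 t \<phi> \<phi>'] t d1 by blast
    have "\<phi>' z / z < a / 2" using d(2)[rule_format, of z] zz t z by (simp add: dist_real_def)
    then have "\<phi>' z / z < 0" using an by linarith
    then have "\<phi>' z < 0" using zz(1) by (simp add: divide_less_0_iff)
    then have "t * \<phi>' z < 0" using t(1) by (simp add: mult_pos_neg)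
    then have "\<phi> t < \<phi> 0" using zz(3) by simp
    moreover have "\<phi> 0 \<le> \<phi> t" using e(2) t by simp
    ultimately show False by simp
  qed
qed

lemma Phi_expand:
  fixes X U :: "real^'r^'n"
  shows "(X + t *\<^sub>R U) ** transpose (X + t *\<^sub>R U) =
    X ** transpose X + t *\<^sub>R (X ** transpose U + U ** transpose X) + (t*t) *\<^sub>R (U ** transpose U)"
  by (simp add: vec_eq_iff matrix_matrix_mult_def transpose_def algebra_simps sum.distrib sum_distrib_left)

lemma opt_conditions:
  fixes f :: "real^'n^'n \<Rightarrow> 'w \<Rightarrow> real" and G :: "real^'n^'n \<Rightarrow> 'w \<Rightarrow> real^'n^'n"
    and Hd :: "real^'n^'n \<Rightarrow> 'w \<Rightarrow> real^'n^'n \<Rightarrow> real^'n^'n" and X U :: "real^'r^'n"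
  assumes grad: "\<And>M v. ((\<lambda>N. f N v) has_derivative (\<lambda>K. G M v \<bullet> K)) (at M)"
    and hess: "\<And>M v. ((\<lambda>N. G N v) has_derivative Hd M v) (at M)"
    and locmin: "\<exists>e>0. \<forall>Y::real^'r^'n. dist Y X < e \<longrightarrow> f (X ** transpose X) w \<le> f (Y ** transpose Y) w"
  shows "G (X ** transpose X) w \<bullet> (X ** transpose U + U ** transpose X) = 0"
    "0 \<le> 2 * (G (X ** transpose X) w \<bullet> (U ** transpose U))
       + Hd (X ** transpose X) w (X ** transpose U + U ** transpose X) \<bullet> (X ** transpose U + U ** transpose X)"
proof -
  define M where "M = X ** transpose X"
  define D where "D = X ** transpose U + U ** transpose X"
  define Q where "Q = U ** transpose U"
  define \<Phi> where "\<Phi> t = M + t *\<^sub>R D + (t*t) *\<^sub>R Q" for t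
  have \<Phi>eq: "(X + t *\<^sub>R U) ** transpose (X + t *\<^sub>R U) = \<Phi> t" for t
    unfolding \<Phi>_def M_def D_def Q_def by (rule Phi_expand)
  have \<Phi>0: "\<Phi> 0 = M" by (simp add: \<Phi>_def)
  have d\<Phi>: "(\<Phi> has_derivative (\<lambda>h. h *\<^sub>R (D + (2*t) *\<^sub>R Q))) (at t)" for t
    unfolding \<Phi>_def
    by (auto intro!: derivative_eq_intros simp: algebra_simps)
  define \<phi> where "\<phi> t = f (\<Phi> t) w" for t
  define \<phi>' where "\<phi>' t = G (\<Phi> t) w \<bullet> (D + (2*t) *\<^sub>R Q)" for t
  have d1: "(\<phi> has_real_derivative \<phi>' t) (at t)" for t
  proof -
    have "(\<phi> has_derivative (\<lambda>h. G (\<Phi> t) w \<bullet> (h *\<^sub>R (D + (2*t)*\<^sub>R Q)))) (at t)"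
      unfolding \<phi>_def using has_derivative_compose[OF d\<Phi> grad] .
    moreover have "(\<lambda>h. G (\<Phi> t) w \<bullet> (h *\<^sub>R (D + (2*t)*\<^sub>R Q))) = (*) (\<phi>' t)"
      by (rule ext) (simp add: \<phi>'_def mult.commute)
    ultimately show ?thesis unfolding has_field_derivative_def by simp
  qed
  have lin: "linear (Hd M w)" using has_derivative_linear[OF hess] .
  have d2: "(\<phi>' has_real_derivative (2 * (G M w \<bullet> Q) + Hd M w D \<bullet> D)) (at 0)"
  proof -
    have hG: "((\<lambda>t. G (\<Phi> t) w) has_derivative (\<lambda>h. Hd M w (h *\<^sub>R (D + (2*0) *\<^sub>R Q)))) (at 0)"
      using has_derivative_compose[OF d\<Phi>[of 0] hess] by (simp add: \<Phi>0)
    have hL: "((\<lambda>t. D + (2*t) *\<^sub>R Q) has_derivative (\<lambda>h. (2*h) *\<^sub>R Q)) (at 0)"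
      by (auto intro!: derivative_eq_intros)
    have "(\<phi>' has_derivative (\<lambda>h. G (\<Phi> 0) w \<bullet> ((2*h) *\<^sub>R Q) + Hd M w (h *\<^sub>R (D + (2*0) *\<^sub>R Q)) \<bullet> (D + (2*0) *\<^sub>R Q))) (at 0)"
      unfolding \<phi>'_def[abs_def] by (rule has_derivative_inner[OF hG hL])
    moreover have "(\<lambda>h. G (\<Phi> 0) w \<bullet> ((2*h) *\<^sub>R Q) + Hd M w (h *\<^sub>R (D + (2*0) *\<^sub>R Q)) \<bullet> (D + (2*0) *\<^sub>R Q))
        = (*) (2 * (G M w \<bullet> Q) + Hd M w D \<bullet> D)"
      by (rule ext) (simp add: \<Phi>0 linear_scale[OF lin] algebra_simps)
    ultimately show ?thesis unfolding has_field_derivative_def by simp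
  qed
  have lm: "\<exists>e>0. \<forall>t. \<bar>t\<bar> < e \<longrightarrow> \<phi> 0 \<le> \<phi> t"
  proof -
    obtain e where e: "e > 0" "\<forall>Y::real^'r^'n. dist Y X < e \<longrightarrow> f M w \<le> f (Y ** transpose Y) w"
      using locmin M_def by blast
    define e' where "e' = e / (norm U + 1)"
    have np: "0 < norm U + 1" by (metis norm_ge_zero add_nonneg_pos zero_less_one)
    have e': "e' > 0" using e np by (simp add: e'_def)
    have "\<phi> 0 \<le> \<phi> t" if "\<bar>t\<bar> < e'" for t
    proof -
      have "dist (X + t *\<^sub>R U) X = \<bar>t\<bar> * norm U" by (simp add: dist_norm)
      also have "\<dots> \<le> \<bar>t\<bar> * (norm U + 1)" by (simp add: mult_left_mono)
      also have "\<dots> < e' * (norm U + 1)"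
        using that np by (simp add: mult_strict_right_mono)
      also have "\<dots> = e" using np by (simp add: e'_def)
      finally have "f M w \<le> f ((X + t *\<^sub>R U) ** transpose (X + t *\<^sub>R U)) w" using e(2) by blast
      then show ?thesis by (simp add: \<phi>_def \<Phi>0 \<Phi>eq)
    qed
    then show ?thesis using e' by blast
  qed
  note so = second_order_min[OF d1 d2 lm]
  show "G (X ** transpose X) w \<bullet> (X ** transpose U + U ** transpose X) = 0"
    using so(1) by (simp add: \<phi>'_def \<Phi>0 M_def D_def)
  show "0 \<le> 2 * (G (X ** transpose X) w \<bullet> (U ** transpose U))
       + Hd (X ** transpose X) w (X ** transpose U + U ** transpose X) \<bullet> (X ** transpose U + U ** transpose X)"
    using so(2) by (simp add: M_def D_def Q_def)
qed

lemma range_basis_matrix: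
  fixes A :: "real^'n^'n"
  assumes rk: "rank A = CARD('r)"
  obtains Y :: "real^'r^'n" where "\<forall>a. Y *v a = 0 \<longrightarrow> a = 0" "\<forall>x. \<exists>a. A *v x = Y *v a"
proof -
  obtain Bs where Bs: "Bs \<subseteq> range (\<lambda>x. A *v x)" "independent Bs" "range (\<lambda>x. A *v x) \<subseteq> span Bs"
      "card Bs = dim (range (\<lambda>x. A *v x))"
    by (rule basis_exists)
  have cB: "card Bs = CARD('r)" using Bs(4) rk rank_dim_range by metis
  then have fB: "finite Bs" by (metis card_ge_0_finite zero_less_card_finite finite_UNIV)
  obtain g where g: "bij_betw g (UNIV::'r set) Bs"
    using finite_same_card_bij[of "UNIV::'r set" Bs] fB cB by auto
  define Y :: "real^'r^'n" where "Y = (\<chi> i j. g j $ i)"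
  have Yv: "Y *v a = (\<Sum>j\<in>UNIV. a$j *\<^sub>R g j)" for a
    by (simp add: Y_def matrix_vector_mult_def vec_eq_iff sum_component mult.commute)
  have Yax: "Y *v axis j 1 = g j" for j
    by (simp add: matrix_vector_mult_basis column_def Y_def)
  have inj: "\<forall>a. Y *v a = 0 \<longrightarrow> a = 0"
  proof (intro allI impI)
    fix a assume "Y *v a = 0"
    define c where "c b = a $ (inv_into UNIV g b)" for b
    have ig: "inj g" using g bij_betw_def by blast
    have "(\<Sum>b\<in>Bs. c b *\<^sub>R b) = (\<Sum>j\<in>UNIV. c (g j) *\<^sub>R g j)"
      using sum.reindex_bij_betw[OF g, of "\<lambda>b. c b *\<^sub>R b"] by simp
    also have "\<dots> = (\<Sum>j\<in>UNIV. a$j *\<^sub>R g j)" by (simp add: c_def inv_into_f_f[OF ig])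
    also have "\<dots> = 0" using \<open>Y *v a = 0\<close> Yv by simp
    finally have "\<forall>b\<in>Bs. c b = 0" using Bs(2) independent_explicit by blast
    then have "a$j = 0" for j
      using g bij_betwE[OF g] by (metis c_def inv_into_f_f[OF ig] iso_tuple_UNIV_I)
    then show "a = 0" by (simp add: vec_eq_iff)
  qed
  have "span Bs \<subseteq> range (\<lambda>a. Y *v a)"
  proof (rule span_minimal[OF _ subspace_range_mat])
    show "Bs \<subseteq> range (\<lambda>a. Y *v a)"
      using g by (metis Yax bij_betw_imp_surj_on image_subsetI rangeI imageE subsetI)
  qed
  then have "\<forall>x. \<exists>a. A *v x = Y *v a" using Bs(3) by blast
  then show ?thesis using inj that by blast
qed

lemma outer_La: "(X::real^'r^'n) ** transpose (outer y v) = outer (X *v v) y"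
  by (simp add: vec_eq_iff matrix_matrix_mult_def transpose_def outer_def matrix_vector_mult_def
      sum_distrib_left mult.commute mult.left_commute)

lemma transpose_outer: "transpose (outer a b) = outer b a"
  by (simp add: vec_eq_iff transpose_def outer_def mult.commute)

lemma outer_Lb: "outer y v ** transpose (X::real^'r^'n) = outer y (X *v v)"
  using arg_cong[OF outer_La[of X y v], of transpose]
  by (simp add: matrix_transpose_mul transpose_outer)

lemma outer_Lc: "outer (y::real^'n) (v::real^'r) ** transpose (outer y' v) = (v \<bullet> v) *\<^sub>R outer y y'"
  by (simp add: vec_eq_iff matrix_matrix_mult_def transpose_def outer_def inner_vec_def
      sum_distrib_left sum_distrib_right mult.commute mult.left_commute)

lemma outer_Ld: "inner (outer (a::real^'n) (b::real^'m)) (outer c d) = (a \<bullet> c) * (b \<bullet> d)"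
proof -
  have "inner (outer a b) (outer c d) = (\<Sum>i\<in>UNIV. \<Sum>j\<in>UNIV. (a$i * c$i) * (b$j * d$j))"
    unfolding inner_mat outer_def by (simp add: mult.commute mult.left_commute)
  also have "\<dots> = (a \<bullet> c) * (b \<bullet> d)" by (simp add: inner_vec_def sum_product)
  finally show ?thesis .
qed

theorem theorem1:
  fixes f :: "real^'n^'n \<Rightarrow> real^'m \<Rightarrow> real"
    and G :: "real^'n^'n \<Rightarrow> real^'m \<Rightarrow> real^'n^'n"
    and Hd :: "real^'n^'n \<Rightarrow> real^'m \<Rightarrow> real^'n^'n \<Rightarrow> real^'n^'n"
    and \<delta> \<zeta>1 \<zeta>2 \<epsilon> :: real
    and Mstar :: "real^'n^'n"
    and w :: "real^'m"
    and Xhat :: "real^'r^'n"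
  assumes r_le_n: "CARD('r) \<le> CARD('n)"
    and grad: "\<And>M v. ((\<lambda>N. f N v) has_derivative (\<lambda>K. G M v \<bullet> K)) (at M)"
    and hess: "\<And>M v. ((\<lambda>N. G N v) has_derivative Hd M v) (at M)"
    and hess_cont: "\<And>v K. continuous_on UNIV (\<lambda>M. Hd M v K)"
    and grad_sym: "\<And>M v. transpose (G M v) = G M v"
    and delta: "0 \<le> \<delta>" "\<delta> < 1/3"
    and RIP: "\<And>M N. rank M \<le> 2 * CARD('r) \<Longrightarrow> rank N \<le> 2 * CARD('r) \<Longrightarrow>
               (1 - \<delta>) * (norm N)\<^sup>2 \<le> Hd M 0 N \<bullet> N \<and> Hd M 0 N \<bullet> N \<le> (1 + \<delta>) * (norm N)\<^sup>2"
    and zeta: "0 \<le> \<zeta>1" "0 \<le> \<zeta>2"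
    and noise1: "\<And>v M K. rank M \<le> 2 * CARD('r) \<Longrightarrow> rank K \<le> 2 * CARD('r) \<Longrightarrow>
               \<bar>(G M v - G M 0) \<bullet> K\<bar> \<le> \<zeta>1 * norm v * norm K"
    and noise2: "\<And>v M K L. rank M \<le> 2 * CARD('r) \<Longrightarrow> rank K \<le> 2 * CARD('r) \<Longrightarrow>
               rank L \<le> 2 * CARD('r) \<Longrightarrow>
               \<bar>Hd M v K \<bullet> L - Hd M 0 K \<bullet> L\<bar> \<le> \<zeta>2 * norm v * norm K * norm L"
    and Mstar_sym: "transpose Mstar = Mstar"
    and Mstar_psd: "\<And>x. 0 \<le> x \<bullet> (Mstar *v x)"
    and Mstar_rank: "rank Mstar = CARD('r)"
    and Mstar_min: "\<And>M. transpose M = M \<Longrightarrow> (\<forall>x. 0 \<le> x \<bullet> (M *v x)) \<Longrightarrow>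
               rank M \<le> CARD('r) \<Longrightarrow> f Mstar 0 \<le> f M 0"
    and Mstar_crit: "G Mstar 0 = 0"
    and eps: "0 \<le> \<epsilon>" "\<zeta>2 = 0 \<or> \<epsilon> < (1/3 - \<delta>) / \<zeta>2"
    and w_small: "norm w \<le> \<epsilon>"
    and locmin: "\<exists>e>0. \<forall>Y::real^'r^'n. dist Y Xhat < e \<longrightarrow>
               f (Xhat ** transpose Xhat) w \<le> f (Y ** transpose Y) w"
  shows "norm (Xhat ** transpose Xhat - Mstar)
           \<le> 2 * \<zeta>1 * \<epsilon> / (1 - 3 * (\<delta> + \<zeta>2 * \<epsilon>))"
proof -
  define R where "R = CARD('r)"
  define M where "M = Xhat ** transpose Xhat"
  define E where "E = M - Mstar"
  define d' where "d' = \<delta> + \<zeta>2 * \<epsilon>"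
  define Gw where "Gw = G M w"
  have d3: "1 - 3 * d' > 0"
  proof (cases "\<zeta>2 = 0")
    case True then show ?thesis using delta by (simp add: d'_def)
  next
    case False
    then have zp: "\<zeta>2 > 0" using zeta by simp
    then have "\<epsilon> < (1/3 - \<delta>)/\<zeta>2" using eps(2) False by simp
    then have "\<epsilon> * \<zeta>2 < 1/3 - \<delta>" using zp by (simp add: pos_less_divide_eq)
    then show ?thesis by (simp add: d'_def mult.commute)
  qed
  have dp: "0 \<le> d'" using delta zeta eps by (simp add: d'_def)
  have psdMs: "psd Mstar" using Mstar_psd psd_def by blast
  have rkX: "rank Xhat \<le> R" using rank_bound[of Xhat] by (simp add: R_def)
  have rkM: "rank M \<le> R" using rank_mul_le_left[of Xhat "transpose Xhat"] rkX M_def by simp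
  have rkMs: "rank Mstar \<le> R" using Mstar_rank R_def by simp
  have rkE: "rank E \<le> 2*R" using rank_diff_le[of M Mstar] rkM rkMs E_def by simp
  have rkM2: "rank M \<le> 2*R" "rank Mstar \<le> 2*R" using rkM rkMs by auto
  have rkSeg: "rank (Mstar + t *\<^sub>R E) \<le> 2*R" for t
  proof -
    have "Mstar + t *\<^sub>R E = (1-t) *\<^sub>R Mstar + t *\<^sub>R M" by (simp add: E_def algebra_simps)
    then show ?thesis
      using rank_add_le[of "(1-t) *\<^sub>R Mstar" "t *\<^sub>R M"] rank_scale_le[of "1-t" Mstar]
        rank_scale_le[of t M] rkM rkMs by simp
  qed
  have hb: "(1-d') * (norm N)^2 \<le> Hd A w N \<bullet> N \<and> Hd A w N \<bullet> N \<le> (1+d') * (norm N)^2"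
    if "rank A \<le> 2*R" "rank N \<le> 2*R" for A N
  proof -
    have r: "(1 - \<delta>) * (norm N)^2 \<le> Hd A 0 N \<bullet> N \<and> Hd A 0 N \<bullet> N \<le> (1 + \<delta>) * (norm N)^2"
      using RIP that R_def by blast
    have n: "\<bar>Hd A w N \<bullet> N - Hd A 0 N \<bullet> N\<bar> \<le> \<zeta>2 * norm w * norm N * norm N"
      using noise2 that R_def by blast
    have "\<zeta>2 * norm w \<le> \<zeta>2 * \<epsilon>" by (rule mult_left_mono[OF w_small zeta(2)])
    then have "\<zeta>2 * norm w * (norm N * norm N) \<le> \<zeta>2 * \<epsilon> * (norm N * norm N)"
      by (rule mult_right_mono) simp
    then have n2: "\<bar>Hd A w N \<bullet> N - Hd A 0 N \<bullet> N\<bar> \<le> \<zeta>2 * \<epsilon> * (norm N)^2"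
      using n by (simp add: power2_eq_square mult.assoc)
    have e1: "(1-d') * (norm N)^2 = (1 - \<delta>) * (norm N)^2 - \<zeta>2 * \<epsilon> * (norm N)^2"
      by (simp add: d'_def algebra_simps)
    have e2: "(1+d') * (norm N)^2 = (1 + \<delta>) * (norm N)^2 + \<zeta>2 * \<epsilon> * (norm N)^2"
      by (simp add: d'_def algebra_simps)
    show ?thesis unfolding e1 e2 using r n2 by linarith
  qed
  note opt = opt_conditions[where f=f and G=G and Hd=Hd and X=Xhat and w=w, OF grad hess locmin]
  have Gsym: "transpose Gw = Gw" using grad_sym Gw_def by simp
  have GX: "Gw ** Xhat = 0"
  proof -
    have eqT: "Gw \<bullet> (Xhat ** transpose U) = Gw \<bullet> (U ** transpose Xhat)" for U :: "real^'r^'n"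
      using inner_transpose[of Gw "U ** transpose Xhat"] Gsym by (simp add: matrix_transpose_mul)
    have "2 * ((Gw ** Xhat) \<bullet> U) = 0" for U
      using opt(1)[of U] eqT[of U] inner_mult_transpose[of Gw U Xhat]
      by (simp add: inner_add_right Gw_def M_def)
    from this[of "Gw ** Xhat"] show ?thesis by simp
  qed
  have GM: "Gw \<bullet> M = 0" using inner_mult_transpose[of Gw Xhat Xhat] GX M_def by simp
  have A: "(1-d') * (norm E)^2 - \<zeta>1 * \<epsilon> * norm E \<le> - (Gw \<bullet> Mstar)"
  proof -
    define ch where "ch t = G (Mstar + t *\<^sub>R E) w \<bullet> E" for t
    define ch' where "ch' t = Hd (Mstar + t *\<^sub>R E) w E \<bullet> E" for t
    have dch: "(ch has_real_derivative ch' t) (at t)" for t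
    proof -
      have l: "((\<lambda>t. Mstar + t *\<^sub>R E) has_derivative (\<lambda>h. h *\<^sub>R E)) (at t)"
        by (auto intro!: derivative_eq_intros)
      have hG: "((\<lambda>t. G (Mstar + t *\<^sub>R E) w) has_derivative (\<lambda>h. Hd (Mstar + t *\<^sub>R E) w (h *\<^sub>R E))) (at t)"
        using has_derivative_compose[OF l hess] .
      have "(ch has_derivative (\<lambda>h. G (Mstar + t *\<^sub>R E) w \<bullet> 0 + Hd (Mstar + t *\<^sub>R E) w (h *\<^sub>R E) \<bullet> E)) (at t)"
        unfolding ch_def[abs_def] by (rule has_derivative_inner[OF hG has_derivative_const])
      moreover have "(\<lambda>h. G (Mstar + t *\<^sub>R E) w \<bullet> 0 + Hd (Mstar + t *\<^sub>R E) w (h *\<^sub>R E) \<bullet> E) = (*) (ch' t)"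
        by (rule ext) (simp add: linear_scale[OF has_derivative_linear[OF hess]] ch'_def mult.commute)
      ultimately show ?thesis unfolding has_field_derivative_def by simp
    qed
    obtain \<xi> where \<xi>: "0 < \<xi>" "\<xi> < 1" "ch 1 - ch 0 = (1 - 0) * ch' \<xi>"
      using MVT2[of 0 1 ch ch'] dch by auto
    have h1: "(1-d') * (norm E)^2 \<le> ch' \<xi>" using hb[OF rkSeg[of \<xi>] rkE] by (simp add: ch'_def)
    have c1: "ch 1 = - (Gw \<bullet> Mstar)"
      using GM by (simp add: ch_def E_def Gw_def inner_diff_right)
    have c0: "- (\<zeta>1 * \<epsilon> * norm E) \<le> ch 0"
    proof -
      have "\<bar>(G Mstar w - G Mstar 0) \<bullet> E\<bar> \<le> \<zeta>1 * norm w * norm E"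
        using noise1 rkM2(2) rkE R_def by blast
      moreover have "ch 0 = (G Mstar w - G Mstar 0) \<bullet> E" using Mstar_crit by (simp add: ch_def)
      moreover have "\<zeta>1 * norm w * norm E \<le> \<zeta>1 * \<epsilon> * norm E"
        by (rule mult_right_mono[OF mult_left_mono[OF w_small zeta(1)]]) simp
      ultimately show ?thesis by linarith
    qed
    have "ch 1 - ch 0 = ch' \<xi>" using \<xi>(3) by simp
    then show ?thesis using h1 c1 c0 by linarith
  qed
  obtain v0 :: "real^'r" where v0: "norm v0 = 1"
    "\<forall>v. norm v = 1 \<longrightarrow> (norm (Xhat *v v0))^2 \<le> (norm (Xhat *v v))^2"
  proof -
    obtain u :: "real^'r" where "norm u = 1" using vector_choose_size[of 1] by auto
    then have ne: "sphere (0::real^'r) 1 \<noteq> {}" by auto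
    have "\<exists>x\<in>sphere (0::real^'r) 1. \<forall>y\<in>sphere 0 1. (norm (Xhat *v x))^2 \<le> (norm (Xhat *v y))^2"
      by (rule continuous_attains_inf[OF compact_sphere ne]) (intro continuous_intros)
    then show thesis using that by auto
  qed
  define z where "z = Xhat *v v0"
  define lam where "lam = (norm z)^2"
  have lam0: "0 \<le> lam" by (simp add: lam_def)
  have lam_ge: "lam * (norm a)^2 \<le> (norm (Xhat *v a))^2" for a
  proof (cases "a = 0")
    case False
    then have na: "norm a > 0" by simp
    have "norm ((1/norm a) *\<^sub>R a) = 1" using False by simp
    then have "lam \<le> (norm (Xhat *v ((1/norm a) *\<^sub>R a)))^2" using v0 lam_def z_def by blast
    also have "\<dots> = (norm (Xhat *v a))^2 / (norm a)^2"
      by (simp add: matrix_vector_mult_scaleR power_divide)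
    finally show ?thesis using na by (simp add: pos_le_divide_eq)
  qed simp
  have socy: "- ((1+d') * lam * (norm y)^2) \<le> y \<bullet> (Gw *v y)" if zy: "z \<bullet> y = 0" for y
  proof -
    define U where "U = outer y v0"
    define D where "D = Xhat ** transpose U + U ** transpose Xhat"
    have e1: "Xhat ** transpose U = outer z y" by (simp add: U_def z_def outer_La)
    have e2: "U ** transpose Xhat = outer y z" by (simp add: U_def z_def outer_Lb)
    have vv: "v0 \<bullet> v0 = 1" using v0(1) by (simp add: power2_norm_eq_inner[symmetric])
    have e3: "U ** transpose U = outer y y" by (simp add: U_def outer_Lc vv)
    have so: "0 \<le> 2 * (Gw \<bullet> (U ** transpose U)) + Hd M w D \<bullet> D"
      using opt(2)[of U] by (simp add: Gw_def M_def D_def)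
    have rkD: "rank D \<le> 2*R"
    proof -
      have "rank (Xhat ** transpose U) \<le> R" using rank_mul_le_left[of Xhat "transpose U"] rkX by simp
      moreover have "rank (U ** transpose Xhat) \<le> R"
        using rank_mul_le_right[of U "transpose Xhat"] rkX rank_transpose[of Xhat] by simp
      ultimately show ?thesis using rank_add_le[of "Xhat ** transpose U" "U ** transpose Xhat"] D_def by simp
    qed
    have hD: "Hd M w D \<bullet> D \<le> (1+d') * (norm D)^2" using hb[OF rkM2(1) rkD] by blast
    have nD: "(norm D)^2 = 2 * (lam * (norm y)^2)"
    proof -
      have "(norm D)^2 = D \<bullet> D" by (simp add: power2_norm_eq_inner)
      also have "\<dots> = 2 * ((z \<bullet> z) * (y \<bullet> y))"
        using zy by (simp add: D_def e1 e2 inner_add_left inner_add_right outer_Ld inner_commute)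
      also have "\<dots> = 2 * (lam * (norm y)^2)" by (simp add: lam_def power2_norm_eq_inner)
      finally show ?thesis .
    qed
    have gq: "Gw \<bullet> (U ** transpose U) = y \<bullet> (Gw *v y)" by (simp add: e3 inner_outer)
    have "(1+d') * (norm D)^2 = 2 * ((1+d') * lam * (norm y)^2)" by (simp add: nD)
    then show ?thesis using so hD gq by linarith
  qed
  have B: "- (Gw \<bullet> Mstar) \<le> (1+d')/2 * (norm E)^2"
  proof (cases "lam = 0")
    case True
    then have "z = 0" by (simp add: lam_def)
    then have "psd Gw" using socy True unfolding psd_def by simp
    then have "0 \<le> Gw \<bullet> Mstar" using psd_inner_nonneg Mstar_sym psdMs by blast
    moreover have "0 \<le> (1+d')/2 * (norm E)^2" using dp by simp
    ultimately show ?thesis by linarith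
  next
    case False
    then have lp: "0 < lam" using lam0 by simp
    have ker: "\<forall>a. Xhat *v a = 0 \<longrightarrow> a = 0"
    proof (intro allI impI)
      fix a assume "Xhat *v a = 0"
      then have "lam * (norm a)^2 \<le> 0" using lam_ge[of a] by simp
      then have "(norm a)^2 \<le> 0" using lp by (simp add: mult_le_0_iff)
      then show "a = 0" by simp
    qed
    obtain Bm where Bm: "Bm ** (transpose Xhat ** Xhat) = mat 1" "(transpose Xhat ** Xhat) ** Bm = mat 1"
      "transpose Bm = Bm" using proj_exists[OF ker] by blast
    define P where "P = Xhat ** Bm ** transpose Xhat"
    note pp = proj_props[OF Bm, folded P_def]
    define Pc where "Pc = mat 1 - P"
    have Pcx: "Pc *v x = x - P *v x" for x by (simp add: Pc_def matrix_vector_mult_diff_rdistrib)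
    have psdS: "psd (Gw + ((1+d')*lam) *\<^sub>R Pc)"
      unfolding psd_def
    proof
      fix x
      define y where "y = Pc *v x"
      have XTy: "transpose Xhat *v y = 0"
      proof -
        have "transpose Xhat *v (P *v x) = transpose Xhat *v x"
          using pp(3) by (simp add: matrix_vector_mul_assoc)
        then show ?thesis by (simp add: y_def Pcx matrix_vector_mult_diff_distrib)
      qed
      have zy: "z \<bullet> y = 0"
      proof -
        have "z \<bullet> y = v0 \<bullet> (transpose Xhat *v y)"
          unfolding z_def transpose_matrix_vector by (metis dot_lmul_matrix inner_commute)
        then show ?thesis using XTy by simp
      qed
      have GP: "Gw ** P = 0" using GX by (simp add: P_def matrix_mul_assoc)
      have Gx: "Gw *v x = Gw *v y"
      proof -
        have "Gw *v (P *v x) = 0" using GP by (simp add: matrix_vector_mul_assoc)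
        then show ?thesis by (simp add: y_def Pcx matrix_vector_mult_diff_distrib)
      qed
      have q1: "x \<bullet> (Gw *v x) = y \<bullet> (Gw *v y)"
        using quad_sym[OF Gsym, of x y] Gx by simp
      have q2: "x \<bullet> (Pc *v x) = (norm y)^2"
        using pp(7)[of x]
        by (simp add: y_def Pcx power2_norm_eq_inner inner_diff_left inner_diff_right inner_commute)
      have "x \<bullet> ((Gw + ((1+d')*lam) *\<^sub>R Pc) *v x) = x \<bullet> (Gw *v x) + ((1+d')*lam) * (x \<bullet> (Pc *v x))"
        by (simp add: matrix_vector_mult_add_rdistrib inner_add_right scaleR_matrix_vector_assoc[symmetric])
      also have "\<dots> = y \<bullet> (Gw *v y) + (1+d') * lam * (norm y)^2" using q1 q2 by simp
      also have "\<dots> \<ge> 0" using socy[OF zy] by linarith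
      finally show "0 \<le> x \<bullet> ((Gw + ((1+d')*lam) *\<^sub>R Pc) *v x)" .
    qed
    have Sin: "0 \<le> inner (Gw + ((1+d')*lam) *\<^sub>R Pc) Mstar"
      using psd_inner_nonneg[OF psdS Mstar_sym psdMs] .
    then have B1: "- (Gw \<bullet> Mstar) \<le> (1+d') * lam * (Pc \<bullet> Mstar)"
      by (simp add: inner_add_left)
    have key: "2 * lam * (Pc \<bullet> Mstar) \<le> (norm E)^2"
    proof -
      obtain Y :: "real^'r^'n" where Y: "\<forall>a. Y *v a = 0 \<longrightarrow> a = 0" "\<forall>x. \<exists>a. Mstar *v x = Y *v a"
        using range_basis_matrix[OF Mstar_rank] by blast
      obtain BY where BY: "BY ** (transpose Y ** Y) = mat 1" "(transpose Y ** Y) ** BY = mat 1"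
        "transpose BY = BY" using proj_exists[OF Y(1)] by blast
      define Pi where "Pi = Y ** BY ** transpose Y"
      note qq = proj_props[OF BY, folded Pi_def]
      have PiM: "Pi ** Mstar = Mstar"
        unfolding matrix_eq
      proof
        fix x
        obtain a where a: "Mstar *v x = Y *v a" using Y(2) by blast
        have "(Pi ** Mstar) *v x = Pi *v (Y *v a)" by (simp add: matrix_vector_mul_assoc[symmetric] a)
        also have "\<dots> = Y *v a" using qq(2) by (simp add: matrix_vector_mul_assoc)
        finally show "(Pi ** Mstar) *v x = Mstar *v x" using a by simp
      qed
      define K where "K = M - lam *\<^sub>R P"
      define F where "F = Mstar - K"
      have Msym: "transpose M = M" by (simp add: M_def matrix_transpose_mul)
      have PM: "P ** M = M" using pp(2) by (simp add: M_def matrix_mul_assoc)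
      have iPM: "P \<bullet> M = trace M" using inner_trace[of P M] pp(1) PM by simp
      have iPiM: "Pi \<bullet> Mstar = trace Mstar" using inner_trace[of Pi Mstar] qq(1) PiM by simp
      have Ksym: "transpose K = K" by (simp add: K_def transpose_diff transpose_scalar Msym pp(1))
      have Kpsd: "psd K"
        unfolding psd_def
      proof
        fix x
        define a where "a = (Bm ** transpose Xhat) *v x"
        define u where "u = Xhat *v a"
        define s where "s = transpose Xhat *v u"
        have Pxu: "P *v x = u" by (simp add: P_def u_def a_def matrix_vector_mul_assoc matrix_mul_assoc)
        have XTx: "transpose Xhat *v x = s"
        proof -
          have "transpose Xhat *v (P *v x) = transpose Xhat *v x"
            using pp(3) by (simp add: matrix_vector_mul_assoc)
          then show ?thesis using Pxu s_def by simp
        qed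
        have qM: "x \<bullet> (M *v x) = (norm s)^2"
          using gram_quad[of x "transpose Xhat"] XTx by (simp add: M_def power2_norm_eq_inner)
        have qP: "x \<bullet> (P *v x) = (norm u)^2" using pp(7)[of x] Pxu by (simp add: power2_norm_eq_inner)
        have us: "(norm u)^2 = a \<bullet> s"
          using gram_quad[of a Xhat] by (simp add: u_def s_def power2_norm_eq_inner matrix_vector_mul_assoc)
        have cs: "(norm u)^2 \<le> norm a * norm s" using us norm_cauchy_schwarz[of a s] by simp
        have la: "lam * (norm a)^2 \<le> (norm u)^2" using lam_ge[of a] u_def by simp
        have main: "lam * (norm u)^2 \<le> (norm s)^2"
        proof (cases "norm u = 0")
          case True then show ?thesis by simp
        next
          case False
          define p where "p = (norm u)^2"
          have pp0: "0 < p" using False by (simp add: p_def)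
          have "p^2 \<le> (norm a * norm s)^2" unfolding p_def by (rule power_mono[OF cs]) simp
          then have "lam * p^2 \<le> lam * (norm a * norm s)^2" using lam0 by (rule mult_left_mono)
          also have "\<dots> = (lam * (norm a)^2) * (norm s)^2" by (simp add: power_mult_distrib)
          also have "\<dots> \<le> p * (norm s)^2" using la by (simp add: p_def mult_right_mono)
          finally have "p * (lam * p) \<le> p * (norm s)^2" by (simp add: power2_eq_square mult.commute mult.left_commute)
          then have "lam * p \<le> (norm s)^2" using pp0 by (simp add: mult_le_cancel_left_pos)
          then show ?thesis by (simp add: p_def)
        qed
        have "x \<bullet> (K *v x) = x \<bullet> (M *v x) - lam * (x \<bullet> (P *v x))"
          by (simp add: K_def matrix_vector_mult_diff_rdistrib inner_diff_right scaleR_matrix_vector_assoc[symmetric])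
        then show "0 \<le> x \<bullet> (K *v x)" using qM qP main by simp
      qed
      have iIK: "0 \<le> (mat 1 - Pi) \<bullet> K" using psd_inner_nonneg[OF qq(8) Ksym Kpsd] .
      have trF: "trace F \<le> sqrt (real R) * norm F"
      proof -
        have "trace F = mat 1 \<bullet> F" by (simp add: inner_mat1)
        also have "\<dots> = Pi \<bullet> F + (mat 1 - Pi) \<bullet> Mstar - (mat 1 - Pi) \<bullet> K"
          by (simp add: F_def inner_diff_left inner_diff_right)
        also have "(mat 1 - Pi) \<bullet> Mstar = 0" using iPiM by (simp add: inner_diff_left inner_mat1)
        finally have "trace F \<le> Pi \<bullet> F" using iIK by simp
        also have "\<dots> \<le> norm Pi * norm F" by (rule norm_cauchy_schwarz)
        also have "norm Pi = sqrt (real R)" using qq(6) by (simp add: norm_eq_sqrt_inner R_def)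
        finally show ?thesis .
      qed
      have EF: "E = lam *\<^sub>R P - F" by (simp add: E_def F_def K_def)
      have EE: "(norm E)^2 = lam*lam*(P \<bullet> P) - 2*lam*(P \<bullet> F) + (norm F)^2"
        unfolding EF power2_norm_eq_inner
        by (simp add: inner_diff_left inner_diff_right inner_commute[of F P] algebra_simps)
      have PF: "P \<bullet> F = P \<bullet> Mstar - trace M + lam * real R"
        using iPM pp(6) by (simp add: F_def K_def inner_diff_right R_def)
      have tF: "trace F = trace Mstar - trace M + lam * real R"
      proof -
        have tsc: "trace (lam *\<^sub>R P) = lam * trace P" by (simp add: trace_def sum_distrib_left)
        have "trace F = trace Mstar - trace M + lam * trace P"
          by (simp add: F_def K_def trace_sub tsc)
        then show ?thesis using pp(5) by (simp add: R_def)
      qed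
      have PcM: "Pc \<bullet> Mstar = trace Mstar - P \<bullet> Mstar"
        by (simp add: Pc_def inner_diff_left inner_mat1)
      have ident: "(norm E)^2 - 2*lam*(Pc \<bullet> Mstar) = (norm F)^2 - 2*lam*trace F + lam^2 * real R"
        unfolding EE PF tF PcM using pp(6) by (simp add: R_def power2_eq_square algebra_simps)
      have sq: "(sqrt (real R))^2 = real R" by simp
      have "2*lam*trace F \<le> 2*lam*(sqrt (real R) * norm F)"
        using trF lam0 by (simp add: mult_left_mono)
      moreover have "0 \<le> (norm F - lam * sqrt (real R))^2" by simp
      moreover have "(norm F - lam * sqrt (real R))^2 = (norm F)^2 - 2*lam*(sqrt (real R) * norm F) + lam^2 * real R"
        using sq by (simp add: power2_diff power_mult_distrib algebra_simps)
      ultimately show ?thesis using ident by linarith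
    qed
    have "(1+d') * (2*lam*(Pc \<bullet> Mstar)) \<le> (1+d') * (norm E)^2"
      by (rule mult_left_mono[OF key]) (use dp in simp)
    moreover have "(1+d') * lam * (Pc \<bullet> Mstar) = ((1+d') * (2*lam*(Pc \<bullet> Mstar))) / 2" by simp
    moreover have "(1+d')/2 * (norm E)^2 = ((1+d') * (norm E)^2) / 2" by simp
    ultimately show ?thesis using B1 by linarith
  qed
  have comb: "(1 - 3*d') * (norm E)^2 \<le> 2 * \<zeta>1 * \<epsilon> * norm E"
  proof -
    have "(1 - 3*d') * (norm E)^2 = 2*((1-d') * (norm E)^2) - 2*((1+d')/2 * (norm E)^2)"
      by (simp add: algebra_simps)
    then show ?thesis using A B by linarith
  qed
  have goalE: "norm E \<le> 2 * \<zeta>1 * \<epsilon> / (1 - 3*d')"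
  proof (cases "norm E = 0")
    case True
    then show ?thesis using d3 zeta eps by simp
  next
    case False
    then have nE: "norm E > 0" by simp
    have "norm E * ((1 - 3*d') * norm E) \<le> norm E * (2 * \<zeta>1 * \<epsilon>)"
      using comb by (simp add: power2_eq_square mult.commute mult.left_commute)
    then have "(1 - 3*d') * norm E \<le> 2 * \<zeta>1 * \<epsilon>" using nE by (simp add: mult_le_cancel_left_pos)
    then show ?thesis using d3 by (simp add: pos_le_divide_eq mult.commute)
  qed
  then show ?thesis by (simp add: E_def M_def d'_def)
qed

end
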